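(* Let $\mathcal A=\mathcal A(\mathbb T^2_\theta)$ with the spectral triple and one-form module $\mathcal E$ described below, let $g_0$ be the metric with $g_0(e_i\otimes_{\mathcal A}e_j)=\delta_{ij}1$, let $k\in\mathcal A$ be invertible and $g=kg_0$, and let $\nabla$ be the Levi-Civita connection of $g$ with Christoffel symbols $\Gamma^i_{jk}$. Then $$\mathrm{Ric}(e_1,e_1)=\mathrm{Ric}(e_2,e_2)=-\tfrac12\big(k^{-1}(\partial_1^2+\partial_2^2)(k)+\partial_1(k^{-1})\partial_1(k)+\partial_2(k^{-1})\partial_2(k)\big),$$ $$\mathrm{Ric}(e_1,e_2)=-\mathrm{Ric}(e_2,e_1)=\tfrac12\big(\partial_1(k^{-1})\partial_2(k)-\partial_2(k^{-1})\partial_1(k)\big),$$ $$\mathrm{Scal}=-(\partial_1^2+\partial_2^2)(k)-k\big(\partial_2(k^{-1})\partial_2(k)+\partial_1(k^{-1})\partial_1(k)\big).$$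
   Context: $\mathcal A(\mathbb T^2_\theta)$ is the $*$-algebra generated by unitaries $U,V$ with $UV=e^{2\pi i\theta}VU$; $d_1,d_2$ are the derivations with $d_1U=U,d_1V=0,d_2U=0,d_2V=V$; $\tau$ the canonical faithful trace; $\mathcal H=L^2(\tau)\oplus L^2(\tau)$ with $\mathcal A$ acting diagonally and $D=\begin{pmatrix}0&d_1+id_2\\ d_1-id_2&0\end{pmatrix}$; $d(a)=\sqrt{-1}[D,a]$. The one-form module $\mathcal E$ (span of $a[D,b]$) is free as a right module with central basis $e_1=\begin{pmatrix}0&1\\1&0\end{pmatrix}$, $e_2=\begin{pmatrix}0&i\\-i&0\end{pmatrix}$ (acting on the $\mathbb C^2$ factor), $d(e_1)=d(e_2)=0$, and $d(a)=e_1\partial_1(a)+e_2\partial_2(a)$ where $\partial_1,\partial_2$ are the commuting derivations with $\partial_1U=iU,\partial_1V=0,\partial_2U=0,\partial_2V=iV$. This module satisfies the framework assumptions, with $\sigma(e_i\otimes e_j)=e_j\otimes e_i$ and $m(e_i\otimes e_j)=-m(e_j\otimes e_i)$. Framework: a connection is a $\mathbb C$-linear $\nabla:\mathcal E\to\mathcal E\otimes_{\mathcal A}\mathcal E$ with $\nabla(\omega a)=\nabla(\omega)a+\omega\otimes da$; torsionless if $m\circ\nabla=d$ ($d$ extended to one-forms by $d(\sum a_i\,db_i)=\sum m(da_i\otimes db_i)$); compatible with a metric $g$ if for central $\omega,\eta$: $d(g(\omega\otimes\eta))=(g\otimes\mathrm{id})(\mathrm{id}\otimes\sigma)(\nabla\omega\otimes\eta+\nabla\eta\otimes\omega)$;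 Levi-Civita = torsionless and compatible (it exists uniquely here). Christoffel symbols: $\nabla(e_i)=\sum_{j,l}e_j\otimes e_l\Gamma^i_{jl}$. In this free setting the Ricci curvature is $\mathrm{Ric}=\sum_{j,l}e_j\otimes e_l\,\mathrm{Ric}(e_j,e_l)$ with $\mathrm{Ric}(e_j,e_l)=\sum_i\big[\sum_p(\Gamma^p_{ji}\Gamma^i_{pl}-\Gamma^p_{jl}\Gamma^i_{pi})-\partial_l(\Gamma^i_{ji})+\partial_i(\Gamma^i_{jl})\big]$, and the scalar curvature is $\mathrm{Scal}=\sum_{j,l}g(e_j\otimes e_l)\mathrm{Ric}(e_j,e_l)$. *)

theory Defs
  imports Complex_Main
begin

text \<open>The smooth-free (polynomial) noncommutative torus A(T^2_theta): elements are
  finitely supported coefficient functions f : Z x Z -> C, f standing for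
  sum f(m,n) U^m V^n.  Since U V = e^{2 pi i theta} V U we have
  U^a V^b U^c V^d = e^{-2 pi i theta b c} U^(a+c) V^(b+d).\<close>

type_synonym nct = "int \<times> int \<Rightarrow> complex"

definition nct_alg :: "nct set" where
  "nct_alg = {f. finite {p. f p \<noteq> 0}}"

definition nct_mult :: "real \<Rightarrow> nct \<Rightarrow> nct \<Rightarrow> nct" where
  "nct_mult \<theta> f g = (\<lambda>(m, n). \<Sum>p\<in>{p. f p \<noteq> 0}.
      f p * g (m - fst p, n - snd p)
        * cis (- 2 * pi * \<theta> * of_int (snd p) * of_int (m - fst p)))"

definition nct_one :: nct where
  "nct_one = (\<lambda>p. if p = (0, 0) then 1 else 0)"

definition nct_add :: "nct \<Rightarrow> nct \<Rightarrow> nct" where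
  "nct_add f g = (\<lambda>p. f p + g p)"

definition nct_sub :: "nct \<Rightarrow> nct \<Rightarrow> nct" where
  "nct_sub f g = (\<lambda>p. f p - g p)"

definition nct_smul :: "complex \<Rightarrow> nct \<Rightarrow> nct" where
  "nct_smul c f = (\<lambda>p. c * f p)"

definition nct_sum :: "nat set \<Rightarrow> (nat \<Rightarrow> nct) \<Rightarrow> nct" where
  "nct_sum I F = (\<lambda>p. \<Sum>i\<in>I. F i p)"

text \<open>The commuting derivations: partial_1 U = i U, partial_1 V = 0, partial_2 U = 0, partial_2 V = i V.\<close>
definition nct_d1 :: "nct \<Rightarrow> nct" where
  "nct_d1 f = (\<lambda>(m, n). \<i> * of_int m * f (m, n))"

definition nct_d2 :: "nct \<Rightarrow> nct" where
  "nct_d2 f = (\<lambda>(m, n). \<i> * of_int n * f (m, n))"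

definition nct_der :: "nat \<Rightarrow> nct \<Rightarrow> nct" where
  "nct_der l = (if l = 1 then nct_d1 else nct_d2)"

definition nct_central :: "real \<Rightarrow> nct \<Rightarrow> bool" where
  "nct_central \<theta> x \<longleftrightarrow> x \<in> nct_alg \<and> (\<forall>y\<in>nct_alg. nct_mult \<theta> x y = nct_mult \<theta> y x)"

text \<open>A one-form omega = e_1 a_1 + e_2 a_2 is given by a :: nat => nct
  (indices 1,2); an element of E (x)_A E is sum e_j (x) e_l c_jl.
  The connection with Christoffel symbols Gamma (nabla e_i = sum e_j (x) e_l Gamma^i_jl,
  Gamma i j l = Gamma^i_jl) is, by C-linearity and the Leibniz rule,
  nabla(sum e_i a_i) = sum_i nabla(e_i) a_i + e_i (x) d a_i, with coordinates:\<close>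
definition conn :: "real \<Rightarrow> (nat \<Rightarrow> nat \<Rightarrow> nat \<Rightarrow> nct) \<Rightarrow> (nat \<Rightarrow> nct) \<Rightarrow> nat \<Rightarrow> nat \<Rightarrow> nct" where
  "conn \<theta> \<Gamma> a j l =
     nct_add (nct_sum {1, 2} (\<lambda>i. nct_mult \<theta> (\<Gamma> i j l) (a i))) (nct_der l (a j))"

text \<open>Two-forms: m(e_i (x) e_i) = 0, m(e_2 (x) e_1) = - m(e_1 (x) e_2); a two-form is
  recorded by its coefficient on m(e_1 (x) e_2).
  m(sum e_j (x) e_l c_jl) = m(e_1 (x) e_2)(c_12 - c_21);
  d(sum e_i a_i) = sum_i m(e_i (x) d a_i) = m(e_1 (x) e_2)(partial_2 a_1 - partial_1 a_2).\<close>
definition torsionless :: "real \<Rightarrow> (nat \<Rightarrow> nat \<Rightarrow> nat \<Rightarrow> nct) \<Rightarrow> bool" where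
  "torsionless \<theta> \<Gamma> \<longleftrightarrow>
     (\<forall>a. (\<forall>i\<in>{1, 2}. a i \<in> nct_alg) \<longrightarrow>
        nct_sub (conn \<theta> \<Gamma> a 1 2) (conn \<theta> \<Gamma> a 2 1)
          = nct_sub (nct_der 2 (a 1)) (nct_der 1 (a 2)))"

text \<open>Compatibility with g = k g_0 (g(e_i (x) e_j) = delta_ij k), for central one-forms
  omega = sum e_i a_i, eta = sum e_i b_i (central iff all a_i, b_i central in A):
  d(g(omega (x) eta)) = (g (x) id)(id (x) sigma)(nabla omega (x) eta + nabla eta (x) omega),
  written in coordinates with respect to the basis e_l of E.\<close>
definition metric_compatible :: "real \<Rightarrow> nct \<Rightarrow> (nat \<Rightarrow> nat \<Rightarrow> nat \<Rightarrow> nct) \<Rightarrow> bool" where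
  "metric_compatible \<theta> k \<Gamma> \<longleftrightarrow>
     (\<forall>a b. (\<forall>i\<in>{1, 2}. nct_central \<theta> (a i) \<and> nct_central \<theta> (b i)) \<longrightarrow>
        (\<forall>l\<in>{1, 2}.
          nct_der l (nct_sum {1, 2} (\<lambda>i. nct_mult \<theta> (nct_mult \<theta> k (a i)) (b i)))
          = nct_sum {1, 2} (\<lambda>j. nct_add
               (nct_mult \<theta> k (nct_mult \<theta> (conn \<theta> \<Gamma> a j l) (b j)))
               (nct_mult \<theta> k (nct_mult \<theta> (conn \<theta> \<Gamma> b j l) (a j))))))"

definition levi_civita :: "real \<Rightarrow> nct \<Rightarrow> (nat \<Rightarrow> nat \<Rightarrow> nat \<Rightarrow> nct) \<Rightarrow> bool" where
  "levi_civita \<theta> k \<Gamma> \<longleftrightarrow>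
     (\<forall>i\<in>{1, 2}. \<forall>j\<in>{1, 2}. \<forall>l\<in>{1, 2}. \<Gamma> i j l \<in> nct_alg)
     \<and> torsionless \<theta> \<Gamma> \<and> metric_compatible \<theta> k \<Gamma>"

definition ricci :: "real \<Rightarrow> (nat \<Rightarrow> nat \<Rightarrow> nat \<Rightarrow> nct) \<Rightarrow> nat \<Rightarrow> nat \<Rightarrow> nct" where
  "ricci \<theta> \<Gamma> j l = nct_sum {1, 2} (\<lambda>i.
     nct_add
       (nct_sum {1, 2} (\<lambda>p. nct_sub (nct_mult \<theta> (\<Gamma> p j i) (\<Gamma> i p l))
                                   (nct_mult \<theta> (\<Gamma> p j l) (\<Gamma> i p i))))
       (nct_sub (nct_der i (\<Gamma> i j l)) (nct_der l (\<Gamma> i j i))))"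

definition scalar_curv :: "real \<Rightarrow> nct \<Rightarrow> (nat \<Rightarrow> nat \<Rightarrow> nat \<Rightarrow> nct) \<Rightarrow> nct" where
  "scalar_curv \<theta> k \<Gamma> = nct_sum {1, 2} (\<lambda>j. nct_sum {1, 2} (\<lambda>l.
      nct_mult \<theta> (if j = l then k else (\<lambda>_. 0)) (ricci \<theta> \<Gamma> j l)))"

end

theory Submission
  imports Defs
begin

lemma mult_repr:
  assumes "finite S" "{p. f p \<noteq> 0} \<subseteq> S"
  shows "nct_mult \<theta> f g (m, n) = (\<Sum>p\<in>S. f p * g (m - fst p, n - snd p)
            * cis (- 2 * pi * \<theta> * of_int (snd p) * of_int (m - fst p)))"
  unfolding nct_mult_def
  by (simp, rule sum.mono_neutral_left) (use assms in auto)

lemma alg_fin: "f \<in> nct_alg \<Longrightarrow> finite {p. f p \<noteq> 0}"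
  by (simp add: nct_alg_def)

lemma alg_mult:
  assumes f: "f \<in> nct_alg" and g: "g \<in> nct_alg"
  shows "nct_mult \<theta> f g \<in> nct_alg"
proof -
  let ?T = "(\<lambda>(p, q). (fst p + fst q, snd p + snd q)) ` ({p. f p \<noteq> 0} \<times> {p. g p \<noteq> 0})"
  have "{x. nct_mult \<theta> f g x \<noteq> 0} \<subseteq> ?T"
  proof
    fix x assume "x \<in> {x. nct_mult \<theta> f g x \<noteq> 0}"
    then obtain m n where x: "x = (m, n)" and nz: "nct_mult \<theta> f g (m, n) \<noteq> 0" by (cases x) auto
    then obtain p where "p \<in> {p. f p \<noteq> 0}" and "g (m - fst p, n - snd p) \<noteq> 0"
      unfolding nct_mult_def by (auto elim: sum.not_neutral_contains_not_neutral)
    then have "(p, (m - fst p, n - snd p)) \<in> {p. f p \<noteq> 0} \<times> {p. g p \<noteq> 0}" by auto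
    then show "x \<in> ?T" unfolding x by (force intro: image_eqI)
  qed
  moreover have "finite ?T" using f g by (simp add: nct_alg_def)
  ultimately show ?thesis unfolding nct_alg_def by (auto intro: finite_subset)
qed

lemma d1_apply: "nct_d1 f p = \<i> * of_int (fst p) * f p" by (cases p) (simp add: nct_d1_def)
lemma d2_apply: "nct_d2 f p = \<i> * of_int (snd p) * f p" by (cases p) (simp add: nct_d2_def)

lemma alg_d1: "f \<in> nct_alg \<Longrightarrow> nct_d1 f \<in> nct_alg"
  unfolding nct_alg_def by (auto simp: d1_apply intro: finite_subset)
lemma alg_d2: "f \<in> nct_alg \<Longrightarrow> nct_d2 f \<in> nct_alg"
  unfolding nct_alg_def by (auto simp: d2_apply intro: finite_subset)
lemma alg_add: assumes "f \<in> nct_alg" "g \<in> nct_alg" shows "nct_add f g \<in> nct_alg"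
proof -
  have "{p. f p + g p \<noteq> 0} \<subseteq> {p. f p \<noteq> 0} \<union> {p. g p \<noteq> 0}" by auto
  then show ?thesis using assms unfolding nct_alg_def nct_add_def by (auto intro: finite_subset)
qed
lemma alg_sub: assumes "f \<in> nct_alg" "g \<in> nct_alg" shows "nct_sub f g \<in> nct_alg"
proof -
  have "{p. f p - g p \<noteq> 0} \<subseteq> {p. f p \<noteq> 0} \<union> {p. g p \<noteq> 0}" by auto
  then show ?thesis using assms unfolding nct_alg_def nct_sub_def by (auto intro: finite_subset)
qed
lemma alg_smul: "f \<in> nct_alg \<Longrightarrow> nct_smul c f \<in> nct_alg"
  unfolding nct_alg_def nct_smul_def by (auto intro: finite_subset)
lemma alg_one: "nct_one \<in> nct_alg"
proof -
  have "{p. nct_one p \<noteq> 0} \<subseteq> {(0,0)}" by (auto simp: nct_one_def)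
  then show ?thesis unfolding nct_alg_def by (auto intro: finite_subset)
qed
lemma alg_zero: "(\<lambda>_. 0) \<in> nct_alg"
  unfolding nct_alg_def by simp

lemma mult_assoc:
  assumes f: "f \<in> nct_alg" and g: "g \<in> nct_alg" and h: "h \<in> nct_alg"
  shows "nct_mult \<theta> (nct_mult \<theta> f g) h = nct_mult \<theta> f (nct_mult \<theta> g h)"
proof (rule ext, clarify)
  fix m n
  define Sf where "Sf = {p. f p \<noteq> 0}"
  define Sg where "Sg = {p. g p \<noteq> 0}"
  define sh :: "int \<times> int \<Rightarrow> int \<times> int \<Rightarrow> int \<times> int" where "sh = (\<lambda>p q. (fst p + fst q, snd p + snd q))"
  define T where "T = (\<lambda>(p, q). sh p q) ` (Sf \<times> Sg)"
  have fSf: "finite Sf" "finite Sg" using f g by (auto simp: Sf_def Sg_def nct_alg_def)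
  have fT: "finite T" using fSf by (simp add: T_def)
  have suppfg: "{x. nct_mult \<theta> f g x \<noteq> 0} \<subseteq> T"
  proof
    fix x assume "x \<in> {x. nct_mult \<theta> f g x \<noteq> 0}"
    then obtain m n where x: "x = (m, n)" and nz: "nct_mult \<theta> f g (m, n) \<noteq> 0" by (cases x) auto
    then obtain p where "p \<in> Sf" and "g (m - fst p, n - snd p) \<noteq> 0"
      unfolding nct_mult_def Sf_def by (auto elim: sum.not_neutral_contains_not_neutral)
    then have "(p, (m - fst p, n - snd p)) \<in> Sf \<times> Sg" by (auto simp: Sg_def)
    then show "x \<in> T" unfolding x T_def sh_def by (force intro: image_eqI)
  qed
  let ?c = "\<lambda>t. cis (- 2 * pi * \<theta> * t)"
  have L: "nct_mult \<theta> (nct_mult \<theta> f g) h (m, n) =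
     (\<Sum>q\<in>T. (\<Sum>p\<in>Sf. f p * g (fst q - fst p, snd q - snd p)
            * cis (- 2 * pi * \<theta> * of_int (snd p) * of_int (fst q - fst p)))
       * h (m - fst q, n - snd q) * cis (- 2 * pi * \<theta> * of_int (snd q) * of_int (m - fst q)))"
    apply (subst mult_repr[OF fT suppfg])
    apply (rule sum.cong[OF refl])
    subgoal for q by (cases q) (simp add: mult_repr[OF fSf(1)] Sf_def)
    done
  also have "\<dots> = (\<Sum>p\<in>Sf. \<Sum>q\<in>T. f p * g (fst q - fst p, snd q - snd p)
            * cis (- 2 * pi * \<theta> * of_int (snd p) * of_int (fst q - fst p))
       * h (m - fst q, n - snd q) * cis (- 2 * pi * \<theta> * of_int (snd q) * of_int (m - fst q)))"
    by (simp add: sum_distrib_right sum.swap[of _ T Sf])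
  also have "\<dots> = (\<Sum>p\<in>Sf. \<Sum>r\<in>Sg. f p * (g r * h (m - fst p - fst r, n - snd p - snd r)
         * cis (- 2 * pi * \<theta> * of_int (snd r) * of_int (m - fst p - fst r)))
         * cis (- 2 * pi * \<theta> * of_int (snd p) * of_int (m - fst p)))"
  proof (rule sum.cong[OF refl])
    fix p assume p: "p \<in> Sf"
    have inj: "inj (sh p)" unfolding sh_def inj_def by auto
    have "(\<Sum>q\<in>T. f p * g (fst q - fst p, snd q - snd p)
            * cis (- 2 * pi * \<theta> * of_int (snd p) * of_int (fst q - fst p))
       * h (m - fst q, n - snd q) * cis (- 2 * pi * \<theta> * of_int (snd q) * of_int (m - fst q)))
      = (\<Sum>q\<in>sh p ` Sg. f p * g (fst q - fst p, snd q - snd p)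
            * cis (- 2 * pi * \<theta> * of_int (snd p) * of_int (fst q - fst p))
       * h (m - fst q, n - snd q) * cis (- 2 * pi * \<theta> * of_int (snd q) * of_int (m - fst q)))"
    proof (rule sum.mono_neutral_right[OF fT])
      show "sh p ` Sg \<subseteq> T" using p unfolding T_def by auto
      show "\<forall>i\<in>T - sh p ` Sg. f p * g (fst i - fst p, snd i - snd p) * cis (- 2 * pi * \<theta> * real_of_int (snd p) * real_of_int (fst i - fst p)) *
         h (m - fst i, n - snd i) * cis (- 2 * pi * \<theta> * real_of_int (snd i) * real_of_int (m - fst i)) = 0"
      proof
        fix q assume "q \<in> T - sh p ` Sg"
        then have "(fst q - fst p, snd q - snd p) \<notin> Sg"
          unfolding sh_def by (auto simp: image_iff)
        then show "f p * g (fst q - fst p, snd q - snd p) * cis (- 2 * pi * \<theta> * real_of_int (snd p) * real_of_int (fst q - fst p)) *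
         h (m - fst q, n - snd q) * cis (- 2 * pi * \<theta> * real_of_int (snd q) * real_of_int (m - fst q)) = 0"
          by (simp add: Sg_def)
      qed
    qed
    also have "\<dots> = (\<Sum>r\<in>Sg. f p * g (fst (sh p r) - fst p, snd (sh p r) - snd p)
            * cis (- 2 * pi * \<theta> * of_int (snd p) * of_int (fst (sh p r) - fst p))
       * h (m - fst (sh p r), n - snd (sh p r)) * cis (- 2 * pi * \<theta> * of_int (snd (sh p r)) * of_int (m - fst (sh p r))))"
      by (simp only: sum.reindex[OF inj_on_subset[OF inj subset_UNIV]] comp_def)
    also have "\<dots> = (\<Sum>r\<in>Sg. f p * (g r * h (m - fst p - fst r, n - snd p - snd r)
         * cis (- 2 * pi * \<theta> * of_int (snd r) * of_int (m - fst p - fst r)))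
         * cis (- 2 * pi * \<theta> * of_int (snd p) * of_int (m - fst p)))"
    proof (rule sum.cong[OF refl])
      fix r
      have e: "cis (- 2 * pi * \<theta> * of_int (snd p) * of_int (fst r)) * cis (- 2 * pi * \<theta> * of_int (snd p + snd r) * of_int (m - (fst p + fst r)))
          = cis (- 2 * pi * \<theta> * of_int (snd r) * of_int (m - fst p - fst r)) * cis (- 2 * pi * \<theta> * of_int (snd p) * of_int (m - fst p))"
        unfolding cis_mult by (rule arg_cong[where f=cis]) (simp add: algebra_simps)
      show "(f p * g (fst (sh p r) - fst p, snd (sh p r) - snd p) * cis (- 2 * pi * \<theta> * of_int (snd p) * of_int (fst (sh p r) - fst p)) *
          h (m - fst (sh p r), n - snd (sh p r)) * cis (- 2 * pi * \<theta> * of_int (snd (sh p r)) * of_int (m - fst (sh p r)))) =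
         f p * (g r * h (m - fst p - fst r, n - snd p - snd r) * cis (- 2 * pi * \<theta> * of_int (snd r) * of_int (m - fst p - fst r))) *
         cis (- 2 * pi * \<theta> * of_int (snd p) * of_int (m - fst p))"
        using e unfolding sh_def by (simp add: algebra_simps)
    qed
    finally show "(\<Sum>q\<in>T. f p * g (fst q - fst p, snd q - snd p)
            * cis (- 2 * pi * \<theta> * of_int (snd p) * of_int (fst q - fst p))
       * h (m - fst q, n - snd q) * cis (- 2 * pi * \<theta> * of_int (snd q) * of_int (m - fst q)))
      = (\<Sum>r\<in>Sg. f p * (g r * h (m - fst p - fst r, n - snd p - snd r)
         * cis (- 2 * pi * \<theta> * of_int (snd r) * of_int (m - fst p - fst r)))
         * cis (- 2 * pi * \<theta> * of_int (snd p) * of_int (m - fst p)))" .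
  qed
  also have "\<dots> = nct_mult \<theta> f (nct_mult \<theta> g h) (m, n)"
  proof -
    have gr: "\<And>a b. nct_mult \<theta> g h (a, b) = (\<Sum>r\<in>Sg. g r * h (a - fst r, b - snd r)
            * cis (- 2 * pi * \<theta> * of_int (snd r) * of_int (a - fst r)))"
      by (rule mult_repr) (use fSf in \<open>auto simp: Sg_def\<close>)
    have fr: "nct_mult \<theta> f (nct_mult \<theta> g h) (m, n) = (\<Sum>p\<in>Sf. f p * nct_mult \<theta> g h (m - fst p, n - snd p)
            * cis (- 2 * pi * \<theta> * of_int (snd p) * of_int (m - fst p)))"
      by (rule mult_repr) (use fSf in \<open>auto simp: Sf_def\<close>)
    show ?thesis unfolding fr gr by (simp add: sum_distrib_left sum_distrib_right)
  qed
  finally show "nct_mult \<theta> (nct_mult \<theta> f g) h (m, n) = nct_mult \<theta> f (nct_mult \<theta> g h) (m, n)" .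
qed

lemma mult_one_left: "nct_mult \<theta> nct_one g = g"
proof (rule ext, clarify)
  fix m n
  have "{p. nct_one p \<noteq> 0} = {(0,0)}" by (auto simp: nct_one_def)
  then show "nct_mult \<theta> nct_one g (m, n) = g (m, n)"
    unfolding nct_mult_def by (simp add: nct_one_def)
qed

lemma mult_one_right: assumes "f \<in> nct_alg" shows "nct_mult \<theta> f nct_one = f"
proof (rule ext, clarify)
  fix m n
  have "nct_mult \<theta> f nct_one (m, n) = (\<Sum>p\<in>{p. f p \<noteq> 0}. f p * nct_one (m - fst p, n - snd p)
            * cis (- 2 * pi * \<theta> * of_int (snd p) * of_int (m - fst p)))"
    by (rule mult_repr) (use assms in \<open>auto simp: nct_alg_def\<close>)
  also have "\<dots> = (\<Sum>p\<in>{p. f p \<noteq> 0} \<inter> {(m,n)}. f p * nct_one (m - fst p, n - snd p)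
            * cis (- 2 * pi * \<theta> * of_int (snd p) * of_int (m - fst p)))"
    by (rule sum.mono_neutral_right) (use assms in \<open>auto simp: nct_alg_def nct_one_def\<close>)
  also have "\<dots> = f (m, n)"
    by (cases "f (m,n) = 0") (auto simp: nct_one_def)
  finally show "nct_mult \<theta> f nct_one (m, n) = f (m, n)" .
qed

lemma mult_zero_left: "nct_mult \<theta> (\<lambda>_. 0) g = (\<lambda>_. 0)"
  by (rule ext) (auto simp: nct_mult_def)
lemma mult_zero_right: "nct_mult \<theta> f (\<lambda>_. 0) = (\<lambda>_. 0)"
  by (rule ext) (auto simp: nct_mult_def)

lemma mult_add_right: "nct_mult \<theta> f (nct_add g h) = nct_add (nct_mult \<theta> f g) (nct_mult \<theta> f h)"
  unfolding nct_mult_def nct_add_def by (auto simp: sum.distrib[symmetric] algebra_simps)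

lemma mult_smul_right: "nct_mult \<theta> f (nct_smul c g) = nct_smul c (nct_mult \<theta> f g)"
  unfolding nct_mult_def nct_smul_def by (auto simp: sum_distrib_left algebra_simps)

lemma mult_add_left: assumes "f \<in> nct_alg" "g \<in> nct_alg"
  shows "nct_mult \<theta> (nct_add f g) h = nct_add (nct_mult \<theta> f h) (nct_mult \<theta> g h)"
proof (rule ext, clarify)
  fix m n
  define S where "S = {p. f p \<noteq> 0} \<union> {p. g p \<noteq> 0}"
  have fS: "finite S" using assms by (auto simp: S_def nct_alg_def)
  show "nct_mult \<theta> (nct_add f g) h (m, n) = nct_add (nct_mult \<theta> f h) (nct_mult \<theta> g h) (m, n)"
    unfolding nct_add_def
    apply (subst (1 2 3) mult_repr[OF fS])
    by (auto simp: S_def nct_add_def sum.distrib[symmetric] algebra_simps)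
qed

lemma mult_smul_left: assumes "f \<in> nct_alg"
  shows "nct_mult \<theta> (nct_smul c f) h = nct_smul c (nct_mult \<theta> f h)"
proof (rule ext, clarify)
  fix m n
  define S where "S = {p. f p \<noteq> 0}"
  have fS: "finite S" using assms by (auto simp: S_def nct_alg_def)
  show "nct_mult \<theta> (nct_smul c f) h (m, n) = nct_smul c (nct_mult \<theta> f h) (m, n)"
    unfolding nct_smul_def
    apply (subst (1 2) mult_repr[OF fS])
    by (auto simp: S_def nct_smul_def sum_distrib_left algebra_simps)
qed

lemma d1_leibniz: assumes "f \<in> nct_alg" "g \<in> nct_alg"
  shows "nct_d1 (nct_mult \<theta> f g) = nct_add (nct_mult \<theta> (nct_d1 f) g) (nct_mult \<theta> f (nct_d1 g))"
proof (rule ext, clarify)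
  fix m n
  define S where "S = {p. f p \<noteq> 0}"
  have fS: "finite S" using assms by (auto simp: S_def nct_alg_def)
  have e: "\<And>p. \<i> * of_int m = \<i> * of_int (fst p) + \<i> * of_int (m - fst p)"
    by (simp add: algebra_simps)
  show "nct_d1 (nct_mult \<theta> f g) (m, n) = nct_add (nct_mult \<theta> (nct_d1 f) g) (nct_mult \<theta> f (nct_d1 g)) (m, n)"
    unfolding nct_add_def d1_apply
    apply (subst (1 2 3) mult_repr[OF fS])
    apply (auto simp: S_def d1_apply)[3]
    apply (simp add: sum_distrib_left sum.distrib[symmetric])
    apply (rule sum.cong[OF refl])
    apply (subst e)
    by (simp add: algebra_simps)
qed

lemma d2_leibniz: assumes "f \<in> nct_alg" "g \<in> nct_alg"
  shows "nct_d2 (nct_mult \<theta> f g) = nct_add (nct_mult \<theta> (nct_d2 f) g) (nct_mult \<theta> f (nct_d2 g))"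
proof (rule ext, clarify)
  fix m n
  define S where "S = {p. f p \<noteq> 0}"
  have fS: "finite S" using assms by (auto simp: S_def nct_alg_def)
  have e: "\<And>p. \<i> * of_int n = \<i> * of_int (snd p) + \<i> * of_int (n - snd p)"
    by (simp add: algebra_simps)
  show "nct_d2 (nct_mult \<theta> f g) (m, n) = nct_add (nct_mult \<theta> (nct_d2 f) g) (nct_mult \<theta> f (nct_d2 g)) (m, n)"
    unfolding nct_add_def d2_apply
    apply (subst (1 2 3) mult_repr[OF fS])
    apply (auto simp: S_def d2_apply)[3]
    apply (simp add: sum_distrib_left sum.distrib[symmetric])
    apply (rule sum.cong[OF refl])
    apply (subst e)
    by (simp add: algebra_simps)
qed

lemma d1_add: "nct_d1 (nct_add f g) = nct_add (nct_d1 f) (nct_d1 g)"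
  by (rule ext) (simp add: d1_apply nct_add_def algebra_simps)
lemma d2_add: "nct_d2 (nct_add f g) = nct_add (nct_d2 f) (nct_d2 g)"
  by (rule ext) (simp add: d2_apply nct_add_def algebra_simps)
lemma d1_sub: "nct_d1 (nct_sub f g) = nct_sub (nct_d1 f) (nct_d1 g)"
  by (rule ext) (simp add: d1_apply nct_sub_def algebra_simps)
lemma d2_sub: "nct_d2 (nct_sub f g) = nct_sub (nct_d2 f) (nct_d2 g)"
  by (rule ext) (simp add: d2_apply nct_sub_def algebra_simps)
lemma d1_smul: "nct_d1 (nct_smul c f) = nct_smul c (nct_d1 f)"
  by (rule ext) (simp add: d1_apply nct_smul_def algebra_simps)
lemma d2_smul: "nct_d2 (nct_smul c f) = nct_smul c (nct_d2 f)"
  by (rule ext) (simp add: d2_apply nct_smul_def algebra_simps)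
lemma d1_one: "nct_d1 nct_one = (\<lambda>_. 0)"
  by (rule ext) (simp add: d1_apply nct_one_def)
lemma d2_one: "nct_d2 nct_one = (\<lambda>_. 0)"
  by (rule ext) (simp add: d2_apply nct_one_def)
lemma d1_zero: "nct_d1 (\<lambda>_. 0) = (\<lambda>_. 0)"
  by (rule ext) (simp add: d1_apply)
lemma d2_zero: "nct_d2 (\<lambda>_. 0) = (\<lambda>_. 0)"
  by (rule ext) (simp add: d2_apply)
lemma d21: "nct_d2 (nct_d1 f) = nct_d1 (nct_d2 f)"
  by (rule ext) (simp add: d1_apply d2_apply algebra_simps)

lemma sum12: "nct_sum {1, 2} F = nct_add (F 1) (F 2)"
  by (rule ext) (simp add: nct_sum_def nct_add_def)

lemma central_one: "nct_central \<theta> nct_one"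
  unfolding nct_central_def using alg_one mult_one_left mult_one_right by auto
lemma central_zero: "nct_central \<theta> (\<lambda>_. 0)"
  unfolding nct_central_def using alg_zero mult_zero_left mult_zero_right by auto

lemma add_zero_r: "nct_add f (\<lambda>_. 0) = f" by (rule ext) (simp add: nct_add_def)
lemma add_zero_l: "nct_add (\<lambda>_. 0) f = f" by (rule ext) (simp add: nct_add_def)
lemma der_one: "nct_der l nct_one = (\<lambda>_. 0)" by (simp add: nct_der_def d1_one d2_one)
lemma der_zero: "nct_der l (\<lambda>_. 0) = (\<lambda>_. 0)" by (simp add: nct_der_def d1_zero d2_zero)

lemma conn_e:
  assumes "\<forall>i\<in>{1,2}. \<Gamma> i j l \<in> nct_alg" and "m \<in> {1, 2::nat}"
  shows "conn \<theta> \<Gamma> (\<lambda>i. if i = m then nct_one else (\<lambda>_. 0)) j l = \<Gamma> m j l"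
  using assms unfolding conn_def sum12
  by (auto simp: mult_one_right mult_zero_right der_one der_zero add_zero_r add_zero_l)

theorem theorem8p18:
  fixes \<theta> :: real and k kinv :: nct and \<Gamma> :: "nat \<Rightarrow> nat \<Rightarrow> nat \<Rightarrow> nct"
  assumes "k \<in> nct_alg" and "kinv \<in> nct_alg"
    and "nct_mult \<theta> k kinv = nct_one" and "nct_mult \<theta> kinv k = nct_one"
    and "levi_civita \<theta> k \<Gamma>"
  shows "ricci \<theta> \<Gamma> 1 1 = nct_smul (- 1 / 2)
           (nct_add (nct_add (nct_mult \<theta> kinv (nct_add (nct_d1 (nct_d1 k)) (nct_d2 (nct_d2 k))))
                             (nct_mult \<theta> (nct_d1 kinv) (nct_d1 k)))
                    (nct_mult \<theta> (nct_d2 kinv) (nct_d2 k)))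
    \<and> ricci \<theta> \<Gamma> 2 2 = ricci \<theta> \<Gamma> 1 1
    \<and> ricci \<theta> \<Gamma> 1 2 = nct_smul (1 / 2)
           (nct_sub (nct_mult \<theta> (nct_d1 kinv) (nct_d2 k)) (nct_mult \<theta> (nct_d2 kinv) (nct_d1 k)))
    \<and> ricci \<theta> \<Gamma> 2 1 = nct_smul (- 1) (ricci \<theta> \<Gamma> 1 2)
    \<and> scalar_curv \<theta> k \<Gamma> =
         nct_sub (nct_smul (- 1) (nct_add (nct_d1 (nct_d1 k)) (nct_d2 (nct_d2 k))))
                 (nct_mult \<theta> k (nct_add (nct_mult \<theta> (nct_d2 kinv) (nct_d2 k))
                                        (nct_mult \<theta> (nct_d1 kinv) (nct_d1 k))))"
proof -
  note k = assms(1) and h = assms(2) and kh = assms(3) and hk = assms(4)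
  have Galg: "\<forall>i\<in>{1,2}. \<forall>j\<in>{1,2}. \<forall>l\<in>{1,2}. \<Gamma> i j l \<in> nct_alg"
    and tor: "torsionless \<theta> \<Gamma>" and mc: "metric_compatible \<theta> k \<Gamma>"
    using assms(5) unfolding levi_civita_def by auto
  define e :: "nat \<Rightarrow> nat \<Rightarrow> nct" where "e m = (\<lambda>i. if i = m then nct_one else (\<lambda>_. 0))" for m
  have ealg: "\<forall>i\<in>{1,2}. e m i \<in> nct_alg" for m by (simp add: e_def alg_one alg_zero)
  have ecen: "nct_central \<theta> (e m i)" for m i by (simp add: e_def central_one central_zero)
  have conne: "conn \<theta> \<Gamma> (e m) j l = \<Gamma> m j l" if "m \<in> {1,2}" "j \<in> {1,2}" "l \<in> {1,2}" for m j l
    unfolding e_def by (rule conn_e) (use Galg that in auto)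
  have cancel: "nct_mult \<theta> kinv (nct_mult \<theta> k X) = X" if "X \<in> nct_alg" for X
    using mult_assoc[OF h k that, of \<theta>] hk by (simp add: mult_one_left)
  have sym: "\<Gamma> m 1 2 = \<Gamma> m 2 1" if m: "m \<in> {1,2}" for m
  proof -
    have "nct_sub (conn \<theta> \<Gamma> (e m) 1 2) (conn \<theta> \<Gamma> (e m) 2 1)
          = nct_sub (nct_der 2 (e m 1)) (nct_der 1 (e m 2))"
      using tor ealg[of m] unfolding torsionless_def by (elim allE[of _ "e m"]) (erule mp)
    moreover have "nct_der 2 (e m 1) = (\<lambda>_. 0)" "nct_der 1 (e m 2) = (\<lambda>_. 0)"
      by (auto simp: e_def der_one der_zero)
    ultimately have "nct_sub (\<Gamma> m 1 2) (\<Gamma> m 2 1) = nct_sub (\<lambda>_. 0) (\<lambda>_. 0)"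
      using conne m by simp
    then show ?thesis by (simp add: fun_eq_iff nct_sub_def)
  qed
  have MC: "nct_der l (nct_sum {1, 2} (\<lambda>i. nct_mult \<theta> (nct_mult \<theta> k (e m i)) (e n i)))
          = nct_sum {1, 2} (\<lambda>j. nct_add
               (nct_mult \<theta> k (nct_mult \<theta> (\<Gamma> m j l) (e n j)))
               (nct_mult \<theta> k (nct_mult \<theta> (\<Gamma> n j l) (e m j))))"
    if "m \<in> {1,2}" "n \<in> {1,2}" "l \<in> {1,2}" for m n l
  proof -
    have "nct_der l (nct_sum {1, 2} (\<lambda>i. nct_mult \<theta> (nct_mult \<theta> k (e m i)) (e n i)))
          = nct_sum {1, 2} (\<lambda>j. nct_add
               (nct_mult \<theta> k (nct_mult \<theta> (conn \<theta> \<Gamma> (e m) j l) (e n j)))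
               (nct_mult \<theta> k (nct_mult \<theta> (conn \<theta> \<Gamma> (e n) j l) (e m j))))"
    proof -
      have "\<forall>i\<in>{1, 2}. nct_central \<theta> (e m i) \<and> nct_central \<theta> (e n i)" using ecen by blast
      then show ?thesis using mc \<open>l \<in> {1,2}\<close> unfolding metric_compatible_def
        by (elim allE[of _ "e m"] allE[of _ "e n"]) (drule mp, assumption, erule bspec)
    qed
    also have "\<dots> = nct_sum {1, 2} (\<lambda>j. nct_add
               (nct_mult \<theta> k (nct_mult \<theta> (\<Gamma> m j l) (e n j)))
               (nct_mult \<theta> k (nct_mult \<theta> (\<Gamma> n j l) (e m j))))"
      unfolding sum12 using conne that by simp
    finally show ?thesis .
  qed
  define F1 where "F1 = nct_smul (1/2) (nct_mult \<theta> kinv (nct_d1 k))"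
  define F2 where "F2 = nct_smul (1/2) (nct_mult \<theta> kinv (nct_d2 k))"
  have Gl: "\<Gamma> i j l \<in> nct_alg" if "i \<in> {1,2}" "j \<in> {1,2}" "l \<in> {1,2}" for i j l
    using Galg that by blast
  have e11: "e 1 1 = nct_one" and e12: "e 1 2 = (\<lambda>_. 0)" and e21: "e 2 1 = (\<lambda>_. 0)" and e22: "e 2 2 = nct_one"
    by (simp_all add: e_def)
  note es = e11 e12 e21 e22
  have diag: "\<Gamma> m m l = nct_smul (1/2) (nct_mult \<theta> kinv (nct_der l k))"
    if m: "m \<in> {1,2}" and l: "l \<in> {1,2}" for m l
  proof -
    have G: "\<Gamma> m m l \<in> nct_alg" using Gl m l by auto
    have "nct_der l k = nct_add (nct_mult \<theta> k (\<Gamma> m m l)) (nct_mult \<theta> k (\<Gamma> m m l))"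
    proof (cases "m = 1")
      case True
      show ?thesis using MC[of 1 1 l] l unfolding True sum12 es
        by (simp add: mult_one_right k Gl mult_zero_right mult_zero_left add_zero_l add_zero_r)
    next
      case False
      then have m2: "m = 2" using m by auto
      show ?thesis using MC[of 2 2 l] l unfolding m2 sum12 es
        by (simp add: mult_one_right k Gl mult_zero_right mult_zero_left add_zero_l add_zero_r)
    qed
    from arg_cong[where f="nct_mult \<theta> kinv", OF this]
    have "nct_mult \<theta> kinv (nct_der l k) = nct_add (\<Gamma> m m l) (\<Gamma> m m l)"
      by (simp only: mult_add_right cancel[OF G])
    then show ?thesis by (simp add: fun_eq_iff nct_add_def nct_smul_def)
  qed
  have off: "\<Gamma> 2 1 l = nct_smul (-1) (\<Gamma> 1 2 l)" if l: "l \<in> {1,2}" for l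
  proof -
    have G: "\<Gamma> 2 1 l \<in> nct_alg" "\<Gamma> 1 2 l \<in> nct_alg" using Gl l by auto
    have "(\<lambda>_. 0) = nct_add (nct_mult \<theta> k (\<Gamma> 2 1 l)) (nct_mult \<theta> k (\<Gamma> 1 2 l))"
      using MC[of 1 2 l] l unfolding sum12 es
      by (simp add: mult_one_right k Gl mult_zero_right mult_zero_left add_zero_l add_zero_r der_zero)
    from arg_cong[where f="nct_mult \<theta> kinv", OF this]
    have "nct_mult \<theta> kinv (\<lambda>_. 0) = nct_add (\<Gamma> 2 1 l) (\<Gamma> 1 2 l)"
      by (simp only: mult_add_right cancel[OF G(1)] cancel[OF G(2)])
    then show ?thesis by (simp add: fun_eq_iff nct_add_def nct_smul_def mult_zero_right eq_neg_iff_add_eq_0)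
  qed
  have G111: "\<Gamma> 1 1 1 = F1" using diag[of 1 1] by (simp add: F1_def nct_der_def)
  have G112: "\<Gamma> 1 1 2 = F2" using diag[of 1 2] by (simp add: F2_def nct_der_def)
  have G221: "\<Gamma> 2 2 1 = F1" using diag[of 2 1] by (simp add: F1_def nct_der_def)
  have G222: "\<Gamma> 2 2 2 = F2" using diag[of 2 2] by (simp add: F2_def nct_der_def)
  have G121: "\<Gamma> 1 2 1 = F2" using sym[of 1] G112 by simp
  have G212: "\<Gamma> 2 1 2 = F1" using sym[of 2] G221 by simp
  have G211: "\<Gamma> 2 1 1 = nct_smul (-1) F2" using off[of 1] G121 by simp
  have G122: "\<Gamma> 1 2 2 = nct_smul (-1) F1"
  proof -
    have "\<Gamma> 2 1 2 = nct_smul (-1) (\<Gamma> 1 2 2)" using off[of 2] by simp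
    then show ?thesis using G212 by (simp add: fun_eq_iff nct_smul_def) (metis minus_minus)
  qed
  note Gs = G111 G112 G221 G222 G121 G212 G211 G122
  have F1a: "F1 \<in> nct_alg" and F2a: "F2 \<in> nct_alg"
    unfolding F1_def F2_def by (intro alg_smul alg_mult h alg_d1 alg_d2 k)+
  have dF: "nct_d1 F1 = nct_smul (1/2) (nct_add (nct_mult \<theta> (nct_d1 kinv) (nct_d1 k)) (nct_mult \<theta> kinv (nct_d1 (nct_d1 k))))"
     "nct_d2 F2 = nct_smul (1/2) (nct_add (nct_mult \<theta> (nct_d2 kinv) (nct_d2 k)) (nct_mult \<theta> kinv (nct_d2 (nct_d2 k))))"
     "nct_d1 F2 = nct_smul (1/2) (nct_add (nct_mult \<theta> (nct_d1 kinv) (nct_d2 k)) (nct_mult \<theta> kinv (nct_d1 (nct_d2 k))))"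
     "nct_d2 F1 = nct_smul (1/2) (nct_add (nct_mult \<theta> (nct_d2 kinv) (nct_d1 k)) (nct_mult \<theta> kinv (nct_d1 (nct_d2 k))))"
    unfolding F1_def F2_def
    by (simp_all add: d1_smul d2_smul d1_leibniz d2_leibniz h k alg_d1 alg_d2 d21)
  have der1: "nct_der 1 = nct_d1" and der2: "nct_der 2 = nct_d2" by (simp_all add: nct_der_def)
  have R11: "ricci \<theta> \<Gamma> 1 1 = nct_smul (- 1 / 2)
           (nct_add (nct_add (nct_mult \<theta> kinv (nct_add (nct_d1 (nct_d1 k)) (nct_d2 (nct_d2 k))))
                             (nct_mult \<theta> (nct_d1 kinv) (nct_d1 k)))
                    (nct_mult \<theta> (nct_d2 kinv) (nct_d2 k)))"
    unfolding ricci_def sum12 Gs der1 der2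
    apply (simp only: mult_smul_left[OF F1a] mult_smul_left[OF F2a] mult_smul_right d1_smul d2_smul dF mult_add_right)
    apply (rule ext)
    apply (simp only: nct_add_def nct_sub_def nct_smul_def)
    apply (simp add: algebra_simps)
    done
  have R22: "ricci \<theta> \<Gamma> 2 2 = nct_smul (- 1 / 2)
           (nct_add (nct_add (nct_mult \<theta> kinv (nct_add (nct_d1 (nct_d1 k)) (nct_d2 (nct_d2 k))))
                             (nct_mult \<theta> (nct_d1 kinv) (nct_d1 k)))
                    (nct_mult \<theta> (nct_d2 kinv) (nct_d2 k)))"
    unfolding ricci_def sum12 Gs der1 der2
    apply (simp only: mult_smul_left[OF F1a] mult_smul_left[OF F2a] mult_smul_right d1_smul d2_smul dF mult_add_right)
    apply (rule ext)
    apply (simp only: nct_add_def nct_sub_def nct_smul_def)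
    apply (simp add: algebra_simps)
    done
  have R12: "ricci \<theta> \<Gamma> 1 2 = nct_smul (1 / 2)
           (nct_sub (nct_mult \<theta> (nct_d1 kinv) (nct_d2 k)) (nct_mult \<theta> (nct_d2 kinv) (nct_d1 k)))"
    unfolding ricci_def sum12 Gs der1 der2
    apply (simp only: mult_smul_left[OF F1a] mult_smul_left[OF F2a] mult_smul_right d1_smul d2_smul dF mult_add_right)
    apply (rule ext)
    apply (simp only: nct_add_def nct_sub_def nct_smul_def)
    apply (simp add: algebra_simps)
    done
  have R21: "ricci \<theta> \<Gamma> 2 1 = nct_smul (- 1) (ricci \<theta> \<Gamma> 1 2)"
    unfolding R12 unfolding ricci_def sum12 Gs der1 der2
    apply (simp only: mult_smul_left[OF F1a] mult_smul_left[OF F2a] mult_smul_right d1_smul d2_smul dF mult_add_right)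
    apply (rule ext)
    apply (simp only: nct_add_def nct_sub_def nct_smul_def)
    apply (simp add: algebra_simps)
    done
  have cancel2: "nct_mult \<theta> k (nct_mult \<theta> kinv X) = X" if "X \<in> nct_alg" for X
    using mult_assoc[OF k h that, of \<theta>] kh by (simp add: mult_one_left)
  have SC0: "scalar_curv \<theta> k \<Gamma> = nct_add (nct_add (nct_mult \<theta> k (ricci \<theta> \<Gamma> 1 1)) (nct_mult \<theta> (\<lambda>_. 0) (ricci \<theta> \<Gamma> 1 2)))
      (nct_add (nct_mult \<theta> (\<lambda>_. 0) (ricci \<theta> \<Gamma> 2 1)) (nct_mult \<theta> k (ricci \<theta> \<Gamma> 2 2)))"
    unfolding scalar_curv_def sum12 by simp
  have SC: "scalar_curv \<theta> k \<Gamma> =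
         nct_sub (nct_smul (- 1) (nct_add (nct_d1 (nct_d1 k)) (nct_d2 (nct_d2 k))))
                 (nct_mult \<theta> k (nct_add (nct_mult \<theta> (nct_d2 kinv) (nct_d2 k))
                                        (nct_mult \<theta> (nct_d1 kinv) (nct_d1 k))))"
    unfolding SC0 R11 R22 mult_zero_left
    apply (simp only: mult_smul_right mult_add_right)
    apply (simp only: cancel2 alg_d1 alg_d2 k)
    apply (rule ext)
    apply (simp only: nct_add_def nct_sub_def nct_smul_def)
    apply (simp add: algebra_simps)
    done
  show ?thesis using R11 R22 R12 R21 SC by simp
qed

end
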